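(* Let $d\ge1$. (i) For $\lceil (d+1)/2\rceil\le j\le d$: $A(d+1,j,1)\le A(d+1,j,2)\le\dots\le A(d+1,j,d+1)$. (ii) For $0\le j\le\lfloor (d-1)/2\rfloor$: $A(d+1,j,1)\ge A(d+1,j,2)\ge\dots\ge A(d+1,j,d+1)$. (iii) If $d$ is even: $A(d+1,\tfrac d2,1)\le A(d+1,\tfrac d2,2)\le\dots\le A(d+1,\tfrac d2,\tfrac d2+1)\ge A(d+1,\tfrac d2,\tfrac d2+2)\ge\dots\ge A(d+1,\tfrac d2,d+1)$. (iv) For $0\le j\le d-1$: $A(d+1,j,1)=A(d+1,j+1,d+1)$.
   Context: $S_d$ is the symmetric group on $[d]=\{1,\dots,d\}$. For $\sigma\in S_d$, its descent set is $D(\sigma)=\{i\in[d-1]:\sigma(i)>\sigma(i+1)\}$ and $\mathrm{des}(\sigma)=\#D(\sigma)$. For $0\le i\le d-1$ and $1\le j\le d$, $A(d,i,j)=\#\{\sigma\in S_d:\mathrm{des}(\sigma)=i,\ \sigma(1)=j\}$. *)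

theory Defs
  imports "HOL-Combinatorics.Permutations"
begin

definition descents :: "nat \<Rightarrow> (nat \<Rightarrow> nat) \<Rightarrow> nat set" where
  "descents d \<sigma> = {i \<in> {1..d - 1}. \<sigma> i > \<sigma> (Suc i)}"

definition des :: "nat \<Rightarrow> (nat \<Rightarrow> nat) \<Rightarrow> nat" where
  "des d \<sigma> = card (descents d \<sigma>)"

definition A :: "nat \<Rightarrow> nat \<Rightarrow> nat \<Rightarrow> nat" where
  "A d i j = card {\<sigma>. \<sigma> permutes {1..d} \<and> des d \<sigma> = i \<and> \<sigma> 1 = j}"

end

theory Submission
  imports Defs
begin


lemma perm_iff:
  assumes "finite S"
  shows "\<sigma> permutes S \<longleftrightarrow> (\<forall>x. x \<notin> S \<longrightarrow> \<sigma> x = x) \<and> \<sigma> ` S \<subseteq> S \<and> inj_on \<sigma> S"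
proof
  assume "\<sigma> permutes S"
  then show "(\<forall>x. x \<notin> S \<longrightarrow> \<sigma> x = x) \<and> \<sigma> ` S \<subseteq> S \<and> inj_on \<sigma> S"
    by (simp add: permutes_not_in permutes_image permutes_inj_on)
next
  assume h: "(\<forall>x. x \<notin> S \<longrightarrow> \<sigma> x = x) \<and> \<sigma> ` S \<subseteq> S \<and> inj_on \<sigma> S"
  then have "\<sigma> ` S = S" using endo_inj_surj[OF assms] by blast
  then have "bij_betw \<sigma> S S" using h by (simp add: bij_betw_def)
  then show "\<sigma> permutes S" using h bij_imp_permutes by blast
qed

definition ext :: "nat \<Rightarrow> nat \<Rightarrow> nat" where "ext k v = (if v < k then v else v + 1)"
definition st :: "nat \<Rightarrow> nat \<Rightarrow> nat" where "st k v = (if v < k then v else v - 1)"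

definition ins :: "nat \<Rightarrow> nat \<Rightarrow> (nat \<Rightarrow> nat) \<Rightarrow> nat \<Rightarrow> nat" where
  "ins n k \<tau> = (\<lambda>i. if i = 1 then k else if 2 \<le> i \<and> i \<le> n+1 then ext k (\<tau> (i-1)) else i)"
definition del :: "nat \<Rightarrow> nat \<Rightarrow> (nat \<Rightarrow> nat) \<Rightarrow> nat \<Rightarrow> nat" where
  "del n k \<sigma> = (\<lambda>i. if 1 \<le> i \<and> i \<le> n then st k (\<sigma> (Suc i)) else i)"

lemma ins_perm:
  assumes "\<tau> permutes {1..n}" "1 \<le> k" "k \<le> n+1"
  shows "ins n k \<tau> permutes {1..n+1}"
proof -
  have im: "\<tau> i \<in> {1..n}" if "i \<in> {1..n}" for i by (simp only: permutes_in_image[OF assms(1)] that)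
  have inj: "inj_on \<tau> {1..n}" using assms(1) permutes_inj_on by blast
  show ?thesis unfolding perm_iff[OF finite_atLeastAtMost]
  proof (intro conjI allI impI)
    fix x assume "x \<notin> {1..n+1}" then show "ins n k \<tau> x = x" by (auto simp: ins_def)
  next
    show "ins n k \<tau> ` {1..n + 1} \<subseteq> {1..n + 1}"
    proof
      fix y assume "y \<in> ins n k \<tau> ` {1..n + 1}"
      then obtain i where i: "i \<in> {1..n+1}" "y = ins n k \<tau> i" by blast
      show "y \<in> {1..n+1}"
      proof (cases "i = 1")
        case True then show ?thesis using i assms by (auto simp: ins_def)
      next
        case False
        then have "i - 1 \<in> {1..n}" using i by auto
        then have "\<tau> (i-1) \<in> {1..n}" using im by blast
        then show ?thesis using i False by (auto simp: ins_def ext_def)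
      qed
    qed
  next
    show "inj_on (ins n k \<tau>) {1..n + 1}"
    proof (rule inj_onI)
      fix x y assume x: "x \<in> {1..n+1}" and y: "y \<in> {1..n+1}" and e: "ins n k \<tau> x = ins n k \<tau> y"
      have ne: "ext k v \<noteq> k" for v by (simp add: ext_def)
      have einj: "ext k a = ext k b \<Longrightarrow> a = b" for a b by (simp add: ext_def split: if_split_asm)
      have v1: "ins n k \<tau> 1 = k" by (simp add: ins_def)
      have vx: "ins n k \<tau> z = ext k (\<tau> (z-1))" if "z \<in> {1..n+1}" "z \<noteq> 1" for z
        using that by (simp add: ins_def)
      show "x = y"
      proof (cases "x = 1"; cases "y = 1")
        assume x1: "x \<noteq> 1" and y1: "y \<noteq> 1"
        then have "ext k (\<tau> (x-1)) = ext k (\<tau> (y-1))" using e vx[OF x x1] vx[OF y y1] by simp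
        then have "\<tau> (x-1) = \<tau> (y-1)" by (rule einj)
        moreover have "x - 1 \<in> {1..n}" "y - 1 \<in> {1..n}" using x y x1 y1 by auto
        ultimately have "x - 1 = y - 1" using inj_onD[OF inj] by blast
        then show ?thesis using x y by auto
      next
        assume x1: "x = 1" and y1: "y \<noteq> 1"
        have False using e vx[OF y y1] v1 ne x1 by simp
        then show ?thesis ..
      next
        assume x1: "x \<noteq> 1" and y1: "y = 1"
        have False using e vx[OF x x1] v1 ne y1 by simp
        then show ?thesis ..
      qed simp
    qed
  qed
qed

lemma del_perm:
  assumes "\<sigma> permutes {1..n+1}" "\<sigma> 1 = k"
  shows "del n k \<sigma> permutes {1..n}"
proof -
  have im: "\<sigma> i \<in> {1..n+1}" if "i \<in> {1..n+1}" for i by (simp only: permutes_in_image[OF assms(1)] that)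
  have inj: "inj_on \<sigma> {1..n+1}" using assms(1) permutes_inj_on by blast
  have nk: "\<sigma> i \<noteq> k" if "i \<in> {2..n+1}" for i
    using inj_onD[OF inj, of i 1] that assms(2) by auto
  have k: "k \<in> {1..n+1}" using im[of 1] assms(2) by simp
  show ?thesis unfolding perm_iff[OF finite_atLeastAtMost]
  proof (intro conjI allI impI)
    fix x assume "x \<notin> {1..n}" then show "del n k \<sigma> x = x" by (auto simp: del_def)
  next
    show "del n k \<sigma> ` {1..n} \<subseteq> {1..n}"
    proof
      fix y assume "y \<in> del n k \<sigma> ` {1..n}"
      then obtain i where i: "i \<in> {1..n}" "y = del n k \<sigma> i" by blast
      have "\<sigma> (Suc i) \<in> {1..n+1}" "\<sigma> (Suc i) \<noteq> k" using im[of "Suc i"] nk[of "Suc i"] i by auto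
      then show "y \<in> {1..n}" using i k by (auto simp: del_def st_def)
    qed
  next
    show "inj_on (del n k \<sigma>) {1..n}"
    proof (rule inj_onI)
      fix x y assume x: "x \<in> {1..n}" and y: "y \<in> {1..n}" and e: "del n k \<sigma> x = del n k \<sigma> y"
      have "\<sigma> (Suc x) \<noteq> k" "\<sigma> (Suc y) \<noteq> k" using nk[of "Suc x"] nk[of "Suc y"] x y by auto
      moreover have "st k (\<sigma> (Suc x)) = st k (\<sigma> (Suc y))" using e x y by (simp add: del_def)
      ultimately have "\<sigma> (Suc x) = \<sigma> (Suc y)" by (simp add: st_def split: if_split_asm)
      moreover have "Suc x \<in> {1..n+1}" "Suc y \<in> {1..n+1}" using x y by auto
      ultimately have "Suc x = Suc y" using inj_onD[OF inj] by blast
      then show "x = y" by simp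
    qed
  qed
qed

lemma del_ins: assumes "\<tau> permutes {1..n}" shows "del n k (ins n k \<tau>) = \<tau>"
proof
  fix i show "del n k (ins n k \<tau>) i = \<tau> i"
    using permutes_not_in[OF assms, of i] by (auto simp: del_def ins_def st_def ext_def)
qed

lemma ins_del: assumes "\<sigma> permutes {1..n+1}" "\<sigma> 1 = k" shows "ins n k (del n k \<sigma>) = \<sigma>"
proof
  fix i
  have inj: "inj_on \<sigma> {1..n+1}" using assms(1) permutes_inj_on by blast
  show "ins n k (del n k \<sigma>) i = \<sigma> i"
  proof (cases "i = 1")
    case True then show ?thesis using assms by (simp add: ins_def)
  next
    case False
    show ?thesis
    proof (cases "2 \<le> i \<and> i \<le> n+1")
      case True
      then have "\<sigma> i \<noteq> k" using inj_onD[OF inj, of i 1] assms(2) False by auto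
      then show ?thesis using True False by (auto simp: ins_def del_def st_def ext_def)
    next
      case F: False
      then show ?thesis using False permutes_not_in[OF assms(1), of i] by (auto simp: ins_def del_def)
    qed
  qed
qed



lemma descents_sub: "descents n \<sigma> \<subseteq> {1..n-1}" by (auto simp: descents_def)
lemma finite_descents: "finite (descents n \<sigma>)" using descents_sub finite_subset by blast
lemma des_le: "des n \<sigma> \<le> n - 1"
  unfolding des_def using card_mono[OF finite_atLeastAtMost descents_sub] by simp

lemma descents_ins:
  assumes "1 \<le> n"
  shows "descents (n+1) (ins n k \<tau>) = (if \<tau> 1 < k then {1} else {}) \<union> Suc ` descents n \<tau>"
proof (rule set_eqI)
  fix i
  have ext_less: "ext k a < ext k b \<longleftrightarrow> a < b" for a b by (auto simp: ext_def)
  have ext_lt_k: "ext k v < k \<longleftrightarrow> v < k" for v by (auto simp: ext_def)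
  show "i \<in> descents (n+1) (ins n k \<tau>) \<longleftrightarrow> i \<in> (if \<tau> 1 < k then {1} else {}) \<union> Suc ` descents n \<tau>"
  proof (cases i)
    case 0 then show ?thesis by (auto simp: descents_def)
  next
    case (Suc j)
    show ?thesis
    proof (cases j)
      case 0
      have "ins n k \<tau> 1 = k" "ins n k \<tau> (Suc (Suc 0)) = ext k (\<tau> 1)" using assms by (auto simp: ins_def)
      moreover have "1 \<notin> Suc ` descents n \<tau>" using descents_sub by force
      ultimately show ?thesis using Suc 0 assms ext_lt_k by (auto simp: descents_def)
    next
      case (Suc l)
      have a: "i \<in> descents (n+1) (ins n k \<tau>) \<longleftrightarrow> j \<in> descents n \<tau>"
      proof (cases "i \<le> n")
        case True
        have "ins n k \<tau> i = ext k (\<tau> j)" "ins n k \<tau> (Suc i) = ext k (\<tau> (Suc j))"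
          using True \<open>i = Suc j\<close> Suc by (auto simp: ins_def)
        then show ?thesis using True \<open>i = Suc j\<close> Suc ext_less by (auto simp: descents_def)
      next
        case False then show ?thesis using \<open>i = Suc j\<close> by (auto simp: descents_def)
      qed
      have "i \<in> Suc ` descents n \<tau> \<longleftrightarrow> j \<in> descents n \<tau>" using \<open>i = Suc j\<close> by auto
      then show ?thesis using a \<open>i = Suc j\<close> Suc by auto
    qed
  qed
qed

lemma des_ins:
  assumes "1 \<le> n"
  shows "des (n+1) (ins n k \<tau>) = des n \<tau> + (if \<tau> 1 < k then 1 else 0)"
proof -
  have d: "1 \<notin> Suc ` descents n \<tau>" using descents_sub by force
  have "card ((if \<tau> 1 < k then {1} else {}) \<union> Suc ` descents n \<tau>)
      = card (if \<tau> 1 < k then {1::nat} else {}) + card (Suc ` descents n \<tau>)"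
    by (rule card_Un_disjoint) (use d finite_descents in auto)
  moreover have "card (Suc ` descents n \<tau>) = des n \<tau>"
    unfolding des_def by (rule card_image) simp
  ultimately show ?thesis unfolding des_def[of "n+1"] descents_ins[OF assms] by simp
qed


lemma A_rec:
  assumes n: "1 \<le> n" and k: "1 \<le> k" "k \<le> n+1"
  shows "A (n+1) m k = (\<Sum>k'\<in>{1..<k}. if m = 0 then 0 else A n (m-1) k') + (\<Sum>k'\<in>{k..n}. A n m k')"
proof -
  define S where "S = {\<sigma>. \<sigma> permutes {1..n+1} \<and> des (n+1) \<sigma> = m \<and> \<sigma> 1 = k}"
  define B where "B = {\<tau>. \<tau> permutes {1..n} \<and> des n \<tau> + (if \<tau> 1 < k then 1 else 0) = m}"
  have "bij_betw (ins n k) B S"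
  proof (rule bij_betw_byWitness[where f'="del n k"])
    show "\<forall>a\<in>B. del n k (ins n k a) = a" using del_ins by (auto simp: B_def)
    show "\<forall>a\<in>S. ins n k (del n k a) = a" using ins_del by (auto simp: S_def)
    show "ins n k ` B \<subseteq> S"
    proof
      fix \<sigma> assume "\<sigma> \<in> ins n k ` B"
      then obtain \<tau> where t: "\<tau> \<in> B" "\<sigma> = ins n k \<tau>" by blast
      show "\<sigma> \<in> S" using t ins_perm[of \<tau> n k] k des_ins[OF n, of k \<tau>]
        by (auto simp: B_def S_def ins_def)
    qed
    show "del n k ` S \<subseteq> B"
    proof
      fix \<tau> assume "\<tau> \<in> del n k ` S"
      then obtain \<sigma> where t: "\<sigma> \<in> S" "\<tau> = del n k \<sigma>" by blast
      have p: "\<tau> permutes {1..n}" using t del_perm by (auto simp: S_def)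
      have "des (n+1) (ins n k \<tau>) = m" using t ins_del by (auto simp: S_def)
      then show "\<tau> \<in> B" using p des_ins[OF n, of k \<tau>] by (auto simp: B_def)
    qed
  qed
  then have "A (n+1) m k = card B" unfolding A_def S_def[symmetric] by (simp add: bij_betw_same_card)
  also have "B = (\<Union>k'\<in>{1..n}. {\<tau>. \<tau> permutes {1..n} \<and> des n \<tau> + (if k' < k then 1 else 0) = m \<and> \<tau> 1 = k'})"
  proof -
    have "\<tau> 1 \<in> {1..n}" if "\<tau> permutes {1..n}" for \<tau>
      using n by (simp only: permutes_in_image[OF that]) simp
    then show ?thesis unfolding B_def by auto
  qed
  also have "card \<dots> = (\<Sum>k'\<in>{1..n}. card {\<tau>. \<tau> permutes {1..n} \<and> des n \<tau> + (if k' < k then 1 else 0) = m \<and> \<tau> 1 = k'})"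
    by (rule card_UN_disjoint) (auto simp: finite_permutations)
  also have "\<dots> = (\<Sum>k'\<in>{1..n}. if k' < k then (if m = 0 then 0 else A n (m-1) k') else A n m k')"
  proof (rule sum.cong[OF refl])
    fix k' assume "k' \<in> {1..n}"
    show "card {\<tau>. \<tau> permutes {1..n} \<and> des n \<tau> + (if k' < k then 1 else 0) = m \<and> \<tau> 1 = k'}
      = (if k' < k then (if m = 0 then 0 else A n (m-1) k') else A n m k')"
    proof (cases "k' < k")
      case True
      show ?thesis
      proof (cases "m = 0")
        case True then show ?thesis using \<open>k' < k\<close> by simp
      next
        case False
        then have "{\<tau>. \<tau> permutes {1..n} \<and> des n \<tau> + (if k' < k then 1 else 0) = m \<and> \<tau> 1 = k'}
          = {\<tau>. \<tau> permutes {1..n} \<and> des n \<tau> = m - 1 \<and> \<tau> 1 = k'}" using True by auto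
        then show ?thesis using True False by (simp add: A_def)
      qed
    next
      case False then show ?thesis by (simp add: A_def)
    qed
  qed
  also have "\<dots> = (\<Sum>k'\<in>{1..<k}. if m = 0 then 0 else A n (m-1) k') + (\<Sum>k'\<in>{k..n}. A n m k')"
  proof -
    have u: "{1..n} = {1..<k} \<union> {k..n}" "{1..<k} \<inter> {k..n} = {}" using k by auto
    show ?thesis unfolding u(1) by (subst sum.union_disjoint) (use u(2) in auto)
  qed
  finally show ?thesis .
qed


lemma A_zero_k:
  assumes "1 \<le> n" "k = 0 \<or> n < k"
  shows "A n m k = 0"
proof -
  have "{\<sigma>. \<sigma> permutes {1..n} \<and> des n \<sigma> = m \<and> \<sigma> 1 = k} = {}"
  proof (rule ccontr)
    assume "{\<sigma>. \<sigma> permutes {1..n} \<and> des n \<sigma> = m \<and> \<sigma> 1 = k} \<noteq> {}"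
    then obtain \<sigma> where s: "\<sigma> permutes {1..n}" "\<sigma> 1 = k" by blast
    have "\<sigma> 1 \<in> {1..n}" using assms(1) by (simp only: permutes_in_image[OF s(1)]) simp
    then show False using s assms by auto
  qed
  then show ?thesis unfolding A_def by (metis card.empty)
qed

lemma A_zero_m:
  assumes "n - 1 < m"
  shows "A n m k = 0"
proof -
  have "{\<sigma>. \<sigma> permutes {1..n} \<and> des n \<sigma> = m \<and> \<sigma> 1 = k} = {}"
    using des_le[of n] assms by (metis (mono_tags, lifting) empty_Collect_eq leD)
  then show ?thesis unfolding A_def by (metis card.empty)
qed

definition comp :: "nat \<Rightarrow> (nat \<Rightarrow> nat) \<Rightarrow> nat \<Rightarrow> nat" where
  "comp n \<sigma> = (\<lambda>i. if i \<in> {1..n} then Suc n - \<sigma> i else i)"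

lemma comp_perm:
  assumes "\<sigma> permutes {1..n}"
  shows "comp n \<sigma> permutes {1..n}"
proof -
  have im: "\<sigma> i \<in> {1..n}" if "i \<in> {1..n}" for i by (simp only: permutes_in_image[OF assms(1)] that)
  have inj: "inj_on \<sigma> {1..n}" using assms(1) permutes_inj_on by blast
  show ?thesis unfolding perm_iff[OF finite_atLeastAtMost]
  proof (intro conjI allI impI)
    fix x assume "x \<notin> {1..n}" then show "comp n \<sigma> x = x" by (auto simp: comp_def)
  next
    show "comp n \<sigma> ` {1..n} \<subseteq> {1..n}"
    proof
      fix y assume "y \<in> comp n \<sigma> ` {1..n}"
      then obtain i where i: "i \<in> {1..n}" "y = comp n \<sigma> i" by blast
      have "\<sigma> i \<in> {1..n}" using im i(1) .
      then show "y \<in> {1..n}" using i by (auto simp: comp_def)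
    qed
  next
    show "inj_on (comp n \<sigma>) {1..n}"
    proof (rule inj_onI)
      fix x y assume x: "x \<in> {1..n}" and y: "y \<in> {1..n}" and e: "comp n \<sigma> x = comp n \<sigma> y"
      have "\<sigma> x \<in> {1..n}" "\<sigma> y \<in> {1..n}" using im x y by auto
      moreover have "Suc n - \<sigma> x = Suc n - \<sigma> y" using e x y by (simp add: comp_def)
      ultimately have "\<sigma> x = \<sigma> y" by auto
      then show "x = y" using inj_onD[OF inj] x y by blast
    qed
  qed
qed

lemma comp_comp:
  assumes "\<sigma> permutes {1..n}"
  shows "comp n (comp n \<sigma>) = \<sigma>"
proof
  fix i
  show "comp n (comp n \<sigma>) i = \<sigma> i"
  proof (cases "i \<in> {1..n}")
    case True
    have "\<sigma> i \<in> {1..n}" by (simp only: permutes_in_image[OF assms(1)] True)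
    then show ?thesis using True by (auto simp: comp_def)
  next
    case False then show ?thesis using permutes_not_in[OF assms] by (auto simp: comp_def)
  qed
qed

lemma des_comp:
  assumes "\<sigma> permutes {1..n}"
  shows "des n (comp n \<sigma>) = n - 1 - des n \<sigma>"
proof -
  have im: "\<sigma> i \<in> {1..n}" if "i \<in> {1..n}" for i by (simp only: permutes_in_image[OF assms(1)] that)
  have inj: "inj_on \<sigma> {1..n}" using assms(1) permutes_inj_on by blast
  have "descents n (comp n \<sigma>) = {1..n-1} - descents n \<sigma>"
  proof (rule set_eqI)
    fix i
    show "i \<in> descents n (comp n \<sigma>) \<longleftrightarrow> i \<in> {1..n-1} - descents n \<sigma>"
    proof (cases "i \<in> {1..n-1}")
      case True
      then have ii: "i \<in> {1..n}" "Suc i \<in> {1..n}" by auto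
      then have "\<sigma> i \<in> {1..n}" "\<sigma> (Suc i) \<in> {1..n}" using im by auto
      moreover have "\<sigma> i \<noteq> \<sigma> (Suc i)" using inj_onD[OF inj _ ii] by auto
      ultimately have "(Suc n - \<sigma> (Suc i) < Suc n - \<sigma> i) \<longleftrightarrow> \<not> (\<sigma> (Suc i) < \<sigma> i)" by auto
      then show ?thesis using True ii by (auto simp: descents_def comp_def)
    next
      case False then show ?thesis by (auto simp: descents_def)
    qed
  qed
  then show ?thesis unfolding des_def using card_Diff_subset[OF finite_descents descents_sub] by simp
qed

lemma A_sym:
  assumes "1 \<le> n" "m \<le> n - 1" "1 \<le> k" "k \<le> n"
  shows "A n m k = A n (n - 1 - m) (Suc n - k)"
proof -
  have "bij_betw (comp n) {\<sigma>. \<sigma> permutes {1..n} \<and> des n \<sigma> = m \<and> \<sigma> 1 = k}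
     {\<sigma>. \<sigma> permutes {1..n} \<and> des n \<sigma> = n - 1 - m \<and> \<sigma> 1 = Suc n - k}"
  proof (rule bij_betw_byWitness[where f'="comp n"])
    show "\<forall>a\<in>{\<sigma>. \<sigma> permutes {1..n} \<and> des n \<sigma> = m \<and> \<sigma> 1 = k}. comp n (comp n a) = a"
      using comp_comp by auto
    show "\<forall>a\<in>{\<sigma>. \<sigma> permutes {1..n} \<and> des n \<sigma> = n - 1 - m \<and> \<sigma> 1 = Suc n - k}. comp n (comp n a) = a"
      using comp_comp by auto
    show "comp n ` {\<sigma>. \<sigma> permutes {1..n} \<and> des n \<sigma> = m \<and> \<sigma> 1 = k}
      \<subseteq> {\<sigma>. \<sigma> permutes {1..n} \<and> des n \<sigma> = n - 1 - m \<and> \<sigma> 1 = Suc n - k}"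
      using comp_perm des_comp assms by (auto simp: comp_def)
    show "comp n ` {\<sigma>. \<sigma> permutes {1..n} \<and> des n \<sigma> = n - 1 - m \<and> \<sigma> 1 = Suc n - k}
      \<subseteq> {\<sigma>. \<sigma> permutes {1..n} \<and> des n \<sigma> = m \<and> \<sigma> 1 = k}"
      using comp_perm des_comp assms by (auto simp: comp_def)
  qed
  then show ?thesis unfolding A_def by (rule bij_betw_same_card)
qed



lemma A_total:
  assumes "1 \<le> n" "m \<le> n - 1"
  shows "(\<Sum>k\<in>{1..n}. A n m k) = (\<Sum>k\<in>{1..n}. A n (n - 1 - m) k)"
proof -
  have "(\<Sum>k\<in>{1..n}. A n m k) = (\<Sum>k\<in>{1..n}. A n (n - 1 - m) (n + 1 - k))"
    by (rule sum.cong[OF refl]) (use A_sym assms in auto)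
  also have "\<dots> = (\<Sum>k\<in>{1..n}. A n (n - 1 - m) k)"
    using sum.atLeastAtMost_rev[of "\<lambda>k. A n (n - 1 - m) k" 1 n] by simp
  finally show ?thesis .
qed

lemma split_sum:
  fixes k d :: nat
  assumes "1 \<le> k" "k \<le> d + 1"
  shows "(\<Sum>i\<in>{1..d}. f i) = (\<Sum>i\<in>{1..<k}. f i) + (\<Sum>i\<in>{k..d}. (f i :: nat))"
proof -
  have u: "{1..d} = {1..<k} \<union> {k..d}" "{1..<k} \<inter> {k..d} = {}" using assms by auto
  show ?thesis unfolding u(1) by (rule sum.union_disjoint) (use u(2) in auto)
qed

lemma key:
  assumes "1 \<le> n"
  shows "(\<forall>m k. n - 1 \<le> 2*m \<longrightarrow> A n (m+1) k \<le> A n m k) \<and>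
         (even n \<longrightarrow> (\<forall>k. k \<le> n div 2 \<longrightarrow> A n (n div 2) k \<le> A n (n div 2 - 1) k))"
  using assms
proof (induction n rule: nat_induct_at_least)
  case base
  show ?case using A_zero_m[of 1] by auto
next
  case (Suc d)
  have d1: "1 \<le> d" by fact
  have IHI: "\<And>m k. d - 1 \<le> 2*m \<Longrightarrow> A d (m+1) k \<le> A d m k" using Suc.IH by blast
  have IHM: "\<And>k. even d \<Longrightarrow> k \<le> d div 2 \<Longrightarrow> A d (d div 2) k \<le> A d (d div 2 - 1) k" using Suc.IH by blast
  have partI: "A (d+1) (m+1) k \<le> A (d+1) m k" if dm: "d \<le> 2*m" for m k
  proof (cases "k = 0 \<or> d + 1 < k")
    case True then show ?thesis using A_zero_k[of "d+1" k] by simp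
  next
    case False
    then have k: "1 \<le> k" "k \<le> d+1" by auto
    have L: "A (d+1) (m+1) k = (\<Sum>k'\<in>{1..<k}. A d m k') + (\<Sum>k'\<in>{k..d}. A d (m+1) k')"
      using A_rec[OF d1 k, of "m+1"] by simp
    have R: "A (d+1) m k = (\<Sum>k'\<in>{1..<k}. if m = 0 then 0 else A d (m-1) k') + (\<Sum>k'\<in>{k..d}. A d m k')"
      using A_rec[OF d1 k, of m] by simp
    have s2: "(\<Sum>k'\<in>{k..d}. A d (m+1) k') \<le> (\<Sum>k'\<in>{k..d}. A d m k')"
      by (rule sum_mono) (use IHI dm in auto)
    have m1: "1 \<le> m" using dm d1 by auto
    have s1: "(\<Sum>k'\<in>{1..<k}. A d m k') \<le> (\<Sum>k'\<in>{1..<k}. if m = 0 then 0 else A d (m-1) k')"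
    proof (cases "d + 1 \<le> 2*m")
      case True
      show ?thesis
      proof (rule sum_mono)
        fix k' assume "k' \<in> {1..<k}"
        have "A d (m - 1 + 1) k' \<le> A d (m-1) k'" by (rule IHI) (use True in auto)
        then show "A d m k' \<le> (if m = 0 then 0 else A d (m-1) k')" using m1 by simp
      qed
    next
      case False
      then have dd: "d = 2*m" using dm by auto
      then have ev: "even d" and dv: "d div 2 = m" by auto
      have M: "A d m k' \<le> A d (m-1) k'" if "k' \<le> m" for k' using IHM[OF ev, of k'] that dv by simp
      show ?thesis
      proof (cases "k \<le> m + 1")
        case True
        show ?thesis by (rule sum_mono) (use M m1 True in auto)
      next
        case False
        have T: "(\<Sum>k'\<in>{1..d}. A d m k') = (\<Sum>k'\<in>{1..d}. A d (m-1) k')"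
          using A_total[OF d1, of "m-1"] dd m1 by (simp add: numeral_2_eq_2)
        have mir: "(\<Sum>k'\<in>{k..d}. A d (m-1) k') \<le> (\<Sum>k'\<in>{k..d}. A d m k')"
        proof (rule sum_mono)
          fix k' assume kk: "k' \<in> {k..d}"
          have a: "A d (m-1) k' = A d m (Suc d - k')"
            using A_sym[OF d1, of "m-1" k'] kk k dd m1 by auto
          have b: "A d m k' = A d (m-1) (Suc d - k')"
            using A_sym[OF d1, of m k'] kk k dd m1 by auto
          have "Suc d - k' \<le> m" using kk False dd by auto
          then show "A d (m-1) k' \<le> A d m k'" using a b M by simp
        qed
        have "(\<Sum>k'\<in>{1..<k}. A d m k') \<le> (\<Sum>k'\<in>{1..<k}. A d (m-1) k')"
          using T mir split_sum[OF k, of "A d m"] split_sum[OF k, of "A d (m-1)"] by linarith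
        then show ?thesis using m1 by simp
      qed
    qed
    show ?thesis using L R s1 s2 by linarith
  qed
  have partM: "A (d+1) ((d+1) div 2) k \<le> A (d+1) ((d+1) div 2 - 1) k"
    if ev: "even (d+1)" and kle: "k \<le> (d+1) div 2" for k
  proof -
    define m where "m = d div 2"
    have dd: "d = 2*m + 1" using ev m_def by presburger
    have h1: "(d+1) div 2 = m + 1" "(d+1) div 2 - 1 = m" using dd by auto
    show ?thesis
    proof (cases "k = 0")
      case True then show ?thesis using A_zero_k[of "d+1" k] by simp
    next
      case False
      then have k: "1 \<le> k" "k \<le> d+1" using kle h1 dd by auto
      have L: "A (d+1) (m+1) k = (\<Sum>k'\<in>{1..<k}. A d m k') + (\<Sum>k'\<in>{k..d}. A d (m+1) k')"
        using A_rec[OF d1 k, of "m+1"] by simp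
      have R: "A (d+1) m k = (\<Sum>k'\<in>{1..<k}. if m = 0 then 0 else A d (m-1) k') + (\<Sum>k'\<in>{k..d}. A d m k')"
        using A_rec[OF d1 k, of m] by simp
      have e: "A d (m+1) j \<le> A d m j" for j by (rule IHI) (use dd in auto)
      have "A (d+1) (m+1) k \<le> A (d+1) m k"
      proof (cases "m = 0")
        case True
        then have "k = 1" using kle h1 k by auto
        then show ?thesis using L R True e sum_mono[of "{k..d}" "A d (m+1)" "A d m"] by auto
      next
        case m0: False
        define J where "J = {Suc (Suc d) - k..d}"
        define K1 where "K1 = {k..<Suc (Suc d) - k}"
        have KJ: "{k..d} = K1 \<union> J" "K1 \<inter> J = {}" using kle h1 dd k by (auto simp: J_def K1_def)
        have re: "(\<Sum>k'\<in>{1..<k}. f (Suc d - k')) = (\<Sum>j\<in>J. f j)" for f :: "nat \<Rightarrow> nat"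
        proof (rule sum.reindex_bij_witness[where i="\<lambda>j. Suc d - j" and j="\<lambda>j. Suc d - j"])
        qed (use k in \<open>auto simp: J_def\<close>)
        have a: "(\<Sum>k'\<in>{1..<k}. A d m k') = (\<Sum>j\<in>J. A d m j)"
        proof -
          have "(\<Sum>k'\<in>{1..<k}. A d m k') = (\<Sum>k'\<in>{1..<k}. A d m (Suc d - k'))"
            by (rule sum.cong[OF refl]) (use A_sym[OF d1] dd k in auto)
          then show ?thesis using re by simp
        qed
        have b: "(\<Sum>k'\<in>{1..<k}. if m = 0 then 0 else A d (m-1) k') = (\<Sum>j\<in>J. A d (m+1) j)"
        proof -
          have "(\<Sum>k'\<in>{1..<k}. if m = 0 then 0 else A d (m-1) k') = (\<Sum>k'\<in>{1..<k}. A d (m+1) (Suc d - k'))"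
          proof (rule sum.cong[OF refl])
            fix k' assume kk: "k' \<in> {1..<k}"
            have "A d (m-1) k' = A d (d - 1 - (m-1)) (Suc d - k')"
              by (rule A_sym[OF d1]) (use dd kk k in auto)
            moreover have "d - 1 - (m-1) = m + 1" using dd m0 by auto
            ultimately show "(if m = 0 then 0 else A d (m-1) k') = A d (m+1) (Suc d - k')" using m0 by simp
          qed
          then show ?thesis using re by simp
        qed
        have c: "(\<Sum>j\<in>K1. A d (m+1) j) \<le> (\<Sum>j\<in>K1. A d m j)" by (rule sum_mono) (use e in auto)
        have sK: "(\<Sum>j\<in>{k..d}. f j) = (\<Sum>j\<in>K1. f j) + (\<Sum>j\<in>J. f j)" for f :: "nat \<Rightarrow> nat"
          unfolding KJ(1) by (rule sum.union_disjoint) (use KJ(2) in \<open>auto simp: J_def K1_def\<close>)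
        show ?thesis using L R a b c sK[of "A d m"] sK[of "A d (m+1)"] by linarith
      qed
      then show ?thesis using h1 by simp
    qed
  qed
  show ?case
  proof (intro conjI allI impI)
    fix m k assume "Suc d - 1 \<le> 2 * m"
    then show "A (Suc d) (m + 1) k \<le> A (Suc d) m k" using partI by simp
  next
    fix k assume "even (Suc d)" "k \<le> Suc d div 2"
    then show "A (Suc d) (Suc d div 2) k \<le> A (Suc d) (Suc d div 2 - 1) k" using partM by simp
  qed
qed


lemma A_step:
  assumes d: "1 \<le> d" and k: "1 \<le> k" "k \<le> d"
  shows "A (d+1) j (k+1) + A d j k = A (d+1) j k + (if j = 0 then 0 else A d (j-1) k)"
proof -
  have r1: "A (d+1) j k = (\<Sum>k'\<in>{1..<k}. if j = 0 then 0 else A d (j-1) k') + (\<Sum>k'\<in>{k..d}. A d j k')"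
    using A_rec[OF d, of k j] k by simp
  have r2: "A (d+1) j (k+1) = (\<Sum>k'\<in>{1..<Suc k}. if j = 0 then 0 else A d (j-1) k') + (\<Sum>k'\<in>{Suc k..d}. A d j k')"
    using A_rec[OF d, of "k+1" j] k by simp
  have s1: "(\<Sum>k'\<in>{1..<Suc k}. if j = 0 then 0 else A d (j-1) k') = (\<Sum>k'\<in>{1..<k}. if j = 0 then 0 else A d (j-1) k') + (if j = 0 then 0 else A d (j-1) k)"
    using k by (simp add: sum.atLeastLessThan_Suc)
  have s2: "(\<Sum>k'\<in>{k..d}. A d j k') = A d j k + (\<Sum>k'\<in>{Suc k..d}. A d j k')"
    using k by (simp add: sum.atLeast_Suc_atMost)
  show ?thesis using r1 r2 s1 s2 by linarith
qed

theorem corollary4p9: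
  fixes d :: nat
  assumes "d \<ge> 1"
  shows "(\<forall>j. (d + 1 + 1) div 2 \<le> j \<and> j \<le> d \<longrightarrow>
            (\<forall>k. 1 \<le> k \<and> k \<le> d \<longrightarrow> A (d+1) j k \<le> A (d+1) j (k+1)))
    \<and> (\<forall>j. j \<le> (d - 1) div 2 \<longrightarrow>
            (\<forall>k. 1 \<le> k \<and> k \<le> d \<longrightarrow> A (d+1) j k \<ge> A (d+1) j (k+1)))
    \<and> (even d \<longrightarrow>
            (\<forall>k. 1 \<le> k \<and> k \<le> d div 2 \<longrightarrow> A (d+1) (d div 2) k \<le> A (d+1) (d div 2) (k+1)) \<and>
            (\<forall>k. d div 2 + 1 \<le> k \<and> k \<le> d \<longrightarrow> A (d+1) (d div 2) k \<ge> A (d+1) (d div 2) (k+1)))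
    \<and> (\<forall>j. j \<le> d - 1 \<longrightarrow> A (d+1) j 1 = A (d+1) (j+1) (d+1))"
proof -
  have d1: "1 \<le> d" using assms .
  have KI: "\<And>m k. d - 1 \<le> 2*m \<Longrightarrow> A d (m+1) k \<le> A d m k" using key[OF d1] by blast
  have KM: "\<And>k. even d \<Longrightarrow> k \<le> d div 2 \<Longrightarrow> A d (d div 2) k \<le> A d (d div 2 - 1) k" using key[OF d1] by blast
  have P1: "A (d+1) j k \<le> A (d+1) j (k+1)" if "(d + 1 + 1) div 2 \<le> j" "j \<le> d" "1 \<le> k" "k \<le> d" for j k
  proof -
    have j1: "1 \<le> j" using that by auto
    have "A d (j - 1 + 1) k \<le> A d (j-1) k" by (rule KI) (use that in auto)
    then have "A d j k \<le> A d (j-1) k" using j1 by simp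
    then show ?thesis using A_step[OF d1 that(3,4), of j] j1 by simp
  qed
  have P2: "A (d+1) j (k+1) \<le> A (d+1) j k" if "j \<le> (d - 1) div 2" "1 \<le> k" "k \<le> d" for j k
  proof (cases "j = 0")
    case True then show ?thesis using A_step[OF d1 that(2,3), of j] by simp
  next
    case False
    have a: "A d (j-1) k = A d (d - 1 - (j-1)) (Suc d - k)" by (rule A_sym) (use that d1 in auto)
    have b: "A d j k = A d (d - 1 - j) (Suc d - k)" by (rule A_sym) (use that d1 in auto)
    have c0: "A d (d - 1 - j + 1) (Suc d - k) \<le> A d (d - 1 - j) (Suc d - k)" by (rule KI) (use that in auto)
    have e: "d - 1 - j + 1 = d - j" "d - 1 - (j-1) = d - j" using that False by auto
    have c: "A d (d - j) (Suc d - k) \<le> A d (d - 1 - j) (Suc d - k)" using c0 unfolding e(1) .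
    have "A d (j-1) k \<le> A d j k" unfolding a b e(2) using c .
    then show ?thesis using A_step[OF d1 that(2,3), of j] False by simp
  qed
  have P3: "A (d+1) (d div 2) k \<le> A (d+1) (d div 2) (k+1)" if "even d" "1 \<le> k" "k \<le> d div 2" for k
  proof -
    have j1: "1 \<le> d div 2" using that d1 by auto
    have "A d (d div 2) k \<le> A d (d div 2 - 1) k" using KM that by blast
    moreover have kd: "k \<le> d" using that by auto
    ultimately show ?thesis using A_step[OF d1 that(2) kd, of "d div 2"] that j1 by simp
  qed
  have P4: "A (d+1) (d div 2) (k+1) \<le> A (d+1) (d div 2) k" if ev: "even d" "d div 2 + 1 \<le> k" "k \<le> d" for k
  proof -
    define j where "j = d div 2"
    have dj: "d = 2*j" using ev j_def by auto
    have j1: "1 \<le> j" using dj d1 by auto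
    have a: "A d (j-1) k = A d (d - 1 - (j-1)) (Suc d - k)" by (rule A_sym) (use that d1 j1 dj in auto)
    have b: "A d j k = A d (d - 1 - j) (Suc d - k)" by (rule A_sym) (use that d1 j1 dj in auto)
    have e1: "d - 1 - (j-1) = d div 2" "d - 1 - j = d div 2 - 1" using dj j1 by auto
    have "A d (d div 2) (Suc d - k) \<le> A d (d div 2 - 1) (Suc d - k)" using KM ev that dj by auto
    then have "A d (j-1) k \<le> A d j k" using a b e1 by simp
    then show ?thesis using A_step[OF d1 _ that(3), of j] that j1 j_def by simp
  qed
  have P5: "A (d+1) j 1 = A (d+1) (j+1) (d+1)" for j
  proof -
    have "A (d+1) j 1 = (\<Sum>k'\<in>{1..d}. A d j k')" using A_rec[OF d1, of 1 j] d1 by simp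
    moreover have "A (d+1) (j+1) (d+1) = (\<Sum>k'\<in>{1..d}. A d j k')"
    proof -
      have "A (d+1) (j+1) (d+1) = (\<Sum>k'\<in>{1..<d+1}. if j+1 = 0 then 0 else A d (j+1-1) k') + (\<Sum>k'\<in>{d+1..d}. A d (j+1) k')"
        by (rule A_rec) (use d1 in auto)
      also have "\<dots> = (\<Sum>k'\<in>{1..d}. A d j k')" by (simp add: atLeastLessThanSuc_atLeastAtMost)
      finally show ?thesis .
    qed
    ultimately show ?thesis by simp
  qed
  show ?thesis using P1 P2 P3 P4 P5 by blast
qed

end
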